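(* For every integer $N\ge 0$, let $T_{1\times 3}(4,N)$ be the number of tilings of a $4\times n$ rectangle, $n=3N/4$, by $N$ tiles of size $1\times 3$ (and $T_{1\times 3}(4,N)=0$ if $3N/4\notin\mathbb{Z}$). Then, as formal power series, \[ \sum_{N\ge 0} T_{1\times 3}(4,N)\,z^N=\frac{(1-z)^2(1+z)^2(1+z^2)^2}{1-5z^4+3z^8-z^{12}}. \]
   Context: A tiling of an $m\times n$ rectangle (width $m$, length $n$, made of $mn$ unit squares) by $a\times b$ tiles is a partition of the rectangle into non-overlapping axis-parallel $a\times b$ rectangles with integer corner coordinates, each placed in either of its two orientations. Tilings related by reflections or rotations of the rectangle are counted as distinct. The empty tiling counts once for $N=0$. *)

theory Defs
  imports "HOL-Computational_Algebra.Formal_Power_Series"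
begin

definition cell_rect :: "nat \<Rightarrow> nat \<Rightarrow> nat \<Rightarrow> nat \<Rightarrow> (nat \<times> nat) set" where
  "cell_rect x y a b = {x..<x+a} \<times> {y..<y+b}"

definition tile_placements :: "nat \<Rightarrow> nat \<Rightarrow> (nat \<times> nat) set set" where
  "tile_placements a b = {cell_rect x y a b | x y. True} \<union> {cell_rect x y b a | x y. True}"

definition is_tiling :: "nat \<Rightarrow> nat \<Rightarrow> nat \<Rightarrow> nat \<Rightarrow> (nat \<times> nat) set set \<Rightarrow> bool" where
  "is_tiling m n a b P \<longleftrightarrow>
     P \<subseteq> tile_placements a b \<and>
     (\<forall>S\<in>P. \<forall>T\<in>P. S \<noteq> T \<longrightarrow> S \<inter> T = {}) \<and>
     \<Union>P = {0..<m} \<times> {0..<n}"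

definition num_tilings :: "nat \<Rightarrow> nat \<Rightarrow> nat \<Rightarrow> nat \<Rightarrow> nat" where
  "num_tilings m n a b = card {P. is_tiling m n a b P}"

definition T13_4 :: "nat \<Rightarrow> nat" where
  "T13_4 N = (if 4 dvd (3 * N)
              then card {P. is_tiling 4 (3 * N div 4) 1 3 P \<and> card P = N}
              else 0)"

end

theory Submission
  imports Defs
begin


definition tilings :: "(nat\<times>nat) set \<Rightarrow> (nat\<times>nat) set set set" where
  "tilings R = {P. P \<subseteq> tile_placements 1 3 \<and> (\<forall>S\<in>P. \<forall>T\<in>P. S \<noteq> T \<longrightarrow> S \<inter> T = {}) \<and> \<Union>P = R}"

lemma tile_cases:
  assumes "t \<in> tile_placements 1 3"
  obtains x y where "t = cell_rect x y 1 3" | x y where "t = cell_rect x y 3 1"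
  using assms unfolding tile_placements_def by auto

lemma tile_props:
  assumes "t \<in> tile_placements 1 3"
  shows "t \<noteq> {}" "finite t" "card t = 3"
proof -
  have "t \<noteq> {} \<and> finite t \<and> card t = 3"
    using assms
  proof (cases rule: tile_cases)
    case (1 x y) then show ?thesis by (simp add: cell_rect_def card_cartesian_product)
  next
    case (2 x y) then show ?thesis by (simp add: cell_rect_def card_cartesian_product)
  qed
  then show "t \<noteq> {}" "finite t" "card t = 3" by auto
qed

lemma finite_tilings: "finite R \<Longrightarrow> finite (tilings R)"
  by (rule finite_subset[of _ "Pow (Pow R)"]) (auto simp: tilings_def)

lemma tilings_empty: "tilings {} = {{}}"
proof -
  have "P = {}" if P: "P \<in> tilings {}" for P
  proof (rule ccontr)
    assume "P \<noteq> {}"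
    then obtain x where x: "x \<in> P" by auto
    then have "x \<in> tile_placements 1 3" "x \<subseteq> \<Union>P" using P by (auto simp: tilings_def)
    moreover have "\<Union>P = {}" using P by (simp add: tilings_def)
    ultimately show False using tile_props(1) by auto
  qed
  then show ?thesis by (auto simp: tilings_def)
qed

lemma min_tile:
  assumes "t \<in> tile_placements 1 3" "(cx,cy) \<in> t" "t \<subseteq> R"
    and "\<forall>(x,j)\<in>R. cy < j \<or> (j = cy \<and> cx \<le> x)"
  shows "t = cell_rect cx cy 1 3 \<or> t = cell_rect cx cy 3 1"
  using assms(1)
proof (cases rule: tile_cases)
  case (1 x y)
  then have "(x,y) \<in> t" by (auto simp: cell_rect_def)
  then have "cy < y \<or> (y = cy \<and> cx \<le> x)" using assms(3,4) by auto
  with assms(2) 1 show ?thesis by (auto simp: cell_rect_def)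
next
  case (2 x y)
  then have "(x,y) \<in> t" by (auto simp: cell_rect_def)
  then have "cy < y \<or> (y = cy \<and> cx \<le> x)" using assms(3,4) by auto
  with assms(2) 2 show ?thesis by (auto simp: cell_rect_def)
qed

lemma remove_bij:
  assumes "t \<in> tile_placements 1 3" "t \<subseteq> R"
  shows "card {P \<in> tilings R. t \<in> P} = card (tilings (R - t))"
proof -
  have "bij_betw (\<lambda>P. P - {t}) {P \<in> tilings R. t \<in> P} (tilings (R - t))"
  proof (rule bij_betw_byWitness[where f' = "insert t"])
    show "\<forall>P\<in>{P \<in> tilings R. t \<in> P}. insert t (P - {t}) = P" by auto
    show "\<forall>Q\<in>tilings (R - t). insert t Q - {t} = Q"
    proof
      fix Q assume Q: "Q \<in> tilings (R - t)"
      have "t \<notin> Q"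
      proof
        assume "t \<in> Q"
        then have "t \<subseteq> R - t" using Q by (auto simp: tilings_def)
        then show False using tile_props(1)[OF assms(1)] by blast
      qed
      then show "insert t Q - {t} = Q" by auto
    qed
    show "(\<lambda>P. P - {t}) ` {P \<in> tilings R. t \<in> P} \<subseteq> tilings (R - t)"
    proof
      fix Q assume "Q \<in> (\<lambda>P. P - {t}) ` {P \<in> tilings R. t \<in> P}"
      then obtain P where P: "P \<in> tilings R" "t \<in> P" "Q = P - {t}" by auto
      then show "Q \<in> tilings (R - t)"
        unfolding tilings_def by auto
    qed
    show "insert t ` tilings (R - t) \<subseteq> {P \<in> tilings R. t \<in> P}"
    proof
      fix P assume "P \<in> insert t ` tilings (R - t)"
      then obtain Q where Q: "Q \<in> tilings (R - t)" "P = insert t Q" by auto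
      have sub: "S \<subseteq> R - t" if "S \<in> Q" for S using Q that by (auto simp: tilings_def)
      have dQ: "\<forall>S\<in>Q. \<forall>T\<in>Q. S \<noteq> T \<longrightarrow> S \<inter> T = {}" using Q(1) by (simp add: tilings_def)
      have "\<forall>S\<in>P. \<forall>T\<in>P. S \<noteq> T \<longrightarrow> S \<inter> T = {}"
      proof (intro ballI impI)
        fix S T assume S: "S \<in> P" and T: "T \<in> P" and ST: "S \<noteq> T"
        show "S \<inter> T = {}"
        proof (cases "S = t")
          case True
          then have "T \<in> Q" using T ST Q(2) by auto
          then show ?thesis using sub True by auto
        next
          case False
          then have SQ: "S \<in> Q" using S Q(2) by auto
          show ?thesis
          proof (cases "T = t")
            case True then show ?thesis using sub[OF SQ] by auto
          next
            case False then have "T \<in> Q" using T Q(2) by auto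
            then show ?thesis using dQ SQ ST by auto
          qed
        qed
      qed
      moreover have "\<Union>P = R" using Q assms by (auto simp: tilings_def)
      moreover have "P \<subseteq> tile_placements 1 3" using Q assms by (auto simp: tilings_def)
      ultimately show "P \<in> {P \<in> tilings R. t \<in> P}" using Q by (auto simp: tilings_def)
    qed
  qed
  then show ?thesis by (rule bij_betw_same_card)
qed

lemma split_min:
  assumes fin: "finite R" and c: "(cx,cy) \<in> R"
    and minc: "\<forall>(x,j)\<in>R. cy < j \<or> (j = cy \<and> cx \<le> x)"
  shows "card (tilings R) =
    (if cell_rect cx cy 1 3 \<subseteq> R then card (tilings (R - cell_rect cx cy 1 3)) else 0) +
    (if cell_rect cx cy 3 1 \<subseteq> R then card (tilings (R - cell_rect cx cy 3 1)) else 0)"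
proof -
  define V where "V = cell_rect cx cy 1 3"
  define H where "H = cell_rect cx cy 3 1"
  have VT: "V \<in> tile_placements 1 3" and HT: "H \<in> tile_placements 1 3"
    unfolding V_def H_def tile_placements_def by auto
  have cV: "(cx,cy) \<in> V" and cH: "(cx,cy) \<in> H" by (auto simp: V_def H_def cell_rect_def)
  have VH: "V \<noteq> H"
  proof
    assume "V = H"
    moreover have "(cx, Suc cy) \<in> V" by (auto simp: V_def cell_rect_def)
    moreover have "(cx, Suc cy) \<notin> H" by (auto simp: H_def cell_rect_def)
    ultimately show False by simp
  qed
  let ?A = "\<lambda>t. {P \<in> tilings R. t \<in> P}"
  have split: "tilings R = ?A V \<union> ?A H"
  proof (intro equalityI subsetI)
    fix P assume P: "P \<in> tilings R"
    then have "(cx,cy) \<in> \<Union>P" using c by (auto simp: tilings_def)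
    then obtain t where t: "t \<in> P" "(cx,cy) \<in> t" by auto
    have "t \<in> tile_placements 1 3" "t \<subseteq> R" using P t by (auto simp: tilings_def)
    from min_tile[OF this(1) t(2) this(2) minc] have "t = V \<or> t = H" by (simp add: V_def H_def)
    then show "P \<in> ?A V \<union> ?A H" using P t by auto
  qed auto
  have disj: "?A V \<inter> ?A H = {}"
  proof (rule ccontr)
    assume "?A V \<inter> ?A H \<noteq> {}"
    then obtain P where "P \<in> tilings R" "V \<in> P" "H \<in> P" by auto
    then have "V \<inter> H = {}" using VH by (auto simp: tilings_def)
    then show False using cV cH by auto
  qed
  have cardA: "card (?A t) = (if t \<subseteq> R then card (tilings (R - t)) else 0)"
    if "t \<in> tile_placements 1 3" for t
  proof (cases "t \<subseteq> R")
    case True then show ?thesis using remove_bij[OF that True] by simp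
  next
    case False
    then have "?A t = {}" by (auto simp: tilings_def)
    then have "card (?A t) = 0" by (simp only: card.empty)
    then show ?thesis using False by simp
  qed
  have finA: "finite (?A t)" for t using finite_tilings[OF fin] by simp
  have "card (tilings R) = card (?A V) + card (?A H)"
    by (subst split, rule card_Un_disjoint[OF finA finA disj])
  then show ?thesis using cardA[OF VT] cardA[OF HT] by (simp add: V_def H_def)
qed




function G :: "nat \<Rightarrow> nat\<times>nat\<times>nat\<times>nat \<Rightarrow> nat" where
 "G r (a,b,c,d) = (if r = 0 then (if a=0 \<and> b=0 \<and> c=0 \<and> d=0 then 1 else 0)
   else if a \<noteq> 0 \<and> b \<noteq> 0 \<and> c \<noteq> 0 \<and> d \<noteq> 0 then G (r-1) (a-1,b-1,c-1,d-1)
   else if a = 0 then G r (3,b,c,d) + (if b = 0 \<and> c = 0 then G r (1,1,1,d) else 0)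
   else if b = 0 then G r (a,3,c,d) + (if c = 0 \<and> d = 0 then G r (a,1,1,1) else 0)
   else if c = 0 then G r (a,b,3,d)
   else G r (a,b,c,3))"
  by pat_completeness auto
termination
  by (relation "measure (\<lambda>(r,(a,b,c,d)). 5*r + (if a=0 then 1 else 0) + (if b=0 then 1 else 0)
      + (if c=0 then 1 else 0) + (if d=0 then 1 else 0))") auto

declare G.simps[simp del]

fun pv :: "nat\<times>nat\<times>nat\<times>nat \<Rightarrow> nat \<Rightarrow> nat" where
  "pv (a,b,c,d) x = (if x = 0 then a else if x = 1 then b else if x = 2 then c else d)"

definition Reg :: "nat\<times>nat\<times>nat\<times>nat \<Rightarrow> nat \<Rightarrow> nat \<Rightarrow> (nat\<times>nat) set" where
  "Reg p y n = {(x,j). x < 4 \<and> j < n \<and> y + pv p x \<le> j}"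

lemma finite_Reg: "finite (Reg p y n)"
  by (rule finite_subset[of _ "{0..<4} \<times> {0..<n}"]) (auto simp: Reg_def)

lemma G_zero: "x < 4 \<Longrightarrow> r < pv p x \<Longrightarrow> G r p = 0"
proof (induction r p rule: G.induct)
  case (1 r a b c d)
  have x: "x = 0 \<or> x = 1 \<or> x = 2 \<or> x = 3" using "1.prems" by auto
  show ?case
  proof (cases "r = 0")
    case True then show ?thesis using "1.prems" x by (subst G.simps) (auto split: if_splits)
  next
    case False
    show ?thesis
      apply (subst G.simps)
      using False 1 x by (auto split: if_splits)
  qed
qed




lemma Reg_min: "(\<forall>x'<cx. pv p x' \<noteq> 0) \<Longrightarrow> \<forall>(x,j)\<in>Reg p y n. y<j \<or> (j=y \<and> cx \<le> x)"
proof (intro ballI)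
  fix z assume A: "\<forall>x'<cx. pv p x' \<noteq> 0" and z: "z \<in> Reg p y n"
  obtain x j where zz: "z = (x,j)" by force
  have "y + pv p x \<le> j" using z zz by (simp add: Reg_def)
  then have "y < j \<or> (j = y \<and> cx \<le> x)"
  proof (cases "j = y")
    case True
    then have "pv p x = 0" using \<open>y + pv p x \<le> j\<close> by simp
    then have "\<not> x < cx" using A by blast
    then show ?thesis using True by simp
  next
    case False then show ?thesis using \<open>y + pv p x \<le> j\<close> by simp
  qed
  then show "case z of (x,j) \<Rightarrow> y<j \<or> (j=y \<and> cx \<le> x)" using zz by simp
qed

lemma x4: "(x::nat) < 4 \<longleftrightarrow> x = 0 \<or> x = 1 \<or> x = 2 \<or> x = 3" by auto

lemma cellV: "cell_rect x y 1 3 = {(x,y),(x,y+1),(x,y+2)}"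
  by (auto simp: cell_rect_def)
lemma cellH: "cell_rect x y 3 1 = {(x,y),(x+1,y),(x+2,y)}"
  by (auto simp: cell_rect_def)


lemma RV0: "Reg (0,b,c,d) y n - cell_rect 0 y 1 3 = Reg (3,b,c,d) y n" by (auto simp: Reg_def cell_rect_def)
lemma RV1: "Reg (a,0,c,d) y n - cell_rect 1 y 1 3 = Reg (a,3,c,d) y n" by (auto simp: Reg_def cell_rect_def)
lemma RV2: "Reg (a,b,0,d) y n - cell_rect 2 y 1 3 = Reg (a,b,3,d) y n" by (auto simp: Reg_def cell_rect_def)
lemma RV3: "Reg (a,b,c,0) y n - cell_rect 3 y 1 3 = Reg (a,b,c,3) y n" by (auto simp: Reg_def cell_rect_def)
lemma RH0: "Reg (0,0,0,d) y n - cell_rect 0 y 3 1 = Reg (1,1,1,d) y n" by (auto simp: Reg_def cell_rect_def split: if_splits)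
lemma RH1: "Reg (a,0,0,0) y n - cell_rect 1 y 3 1 = Reg (a,1,1,1) y n" by (auto simp: Reg_def cell_rect_def split: if_splits)

lemma V_sub: "x < 4 \<Longrightarrow> pv p x = 0 \<Longrightarrow> cell_rect x y 1 3 \<subseteq> Reg p y n \<longleftrightarrow> y + 3 \<le> n"
proof
  assume "cell_rect x y 1 3 \<subseteq> Reg p y n"
  moreover have "(x, y+2) \<in> cell_rect x y 1 3" by (auto simp: cell_rect_def)
  ultimately show "y + 3 \<le> n" by (auto simp: Reg_def)
qed (auto simp: Reg_def cell_rect_def)
lemma H0_sub: "y < n \<Longrightarrow> cell_rect 0 y 3 1 \<subseteq> Reg (0,b,c,d) y n \<longleftrightarrow> b = 0 \<and> c = 0"
proof
  assume "cell_rect 0 y 3 1 \<subseteq> Reg (0,b,c,d) y n"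
  moreover have "(1, y) \<in> cell_rect 0 y 3 1" "(2, y) \<in> cell_rect 0 y 3 1" by (auto simp: cell_rect_def)
  ultimately show "b = 0 \<and> c = 0" by (auto simp: Reg_def)
qed (auto simp: Reg_def cell_rect_def)
lemma H1_sub: "y < n \<Longrightarrow> cell_rect 1 y 3 1 \<subseteq> Reg (a,0,c,d) y n \<longleftrightarrow> c = 0 \<and> d = 0"
proof
  assume "cell_rect 1 y 3 1 \<subseteq> Reg (a,0,c,d) y n"
  moreover have "(2, y) \<in> cell_rect 1 y 3 1" "(3, y) \<in> cell_rect 1 y 3 1" by (auto simp: cell_rect_def)
  ultimately show "c = 0 \<and> d = 0" by (auto simp: Reg_def)
qed (auto simp: Reg_def cell_rect_def)
lemma H2_sub: "\<not> cell_rect 2 y 3 1 \<subseteq> Reg p y n"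
proof
  assume "cell_rect 2 y 3 1 \<subseteq> Reg p y n"
  moreover have "(4,y) \<in> cell_rect 2 y 3 1" by (auto simp: cell_rect_def)
  ultimately show False by (auto simp: Reg_def)
qed
lemma H3_sub: "\<not> cell_rect 3 y 3 1 \<subseteq> Reg p y n"
proof
  assume "cell_rect 3 y 3 1 \<subseteq> Reg p y n"
  moreover have "(4,y) \<in> cell_rect 3 y 3 1" by (auto simp: cell_rect_def)
  ultimately show False by (auto simp: Reg_def)
qed
lemma Reg_shift: "a \<noteq> 0 \<Longrightarrow> b \<noteq> 0 \<Longrightarrow> c \<noteq> 0 \<Longrightarrow> d \<noteq> 0 \<Longrightarrow>
  Reg (a,b,c,d) y n = Reg (a-1,b-1,c-1,d-1) (Suc y) n" by (auto simp: Reg_def)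
lemma Reg_empty: "Reg p y y = {}" by (auto simp: Reg_def)



lemma main: "y + r = n \<Longrightarrow> (\<forall>x<4. pv p x \<le> r) \<Longrightarrow> card (tilings (Reg p y n)) = G r p"
proof (induction r p arbitrary: y n rule: G.induct)
  case (1 r a b c d)
  note prems = "1.prems"
  have bnd: "a \<le> r" "b \<le> r" "c \<le> r" "d \<le> r" using prems(2)
    by (auto dest: spec[of _ 0] spec[of _ 1] spec[of _ 2] spec[of _ 3])
  show ?case
  proof (cases "r = 0")
    case True
    then have "a = 0" "b = 0" "c = 0" "d = 0" using bnd by auto
    moreover have "n = y" using True prems by simp
    ultimately show ?thesis using True by (simp add: Reg_empty tilings_empty G.simps)
  next
    case r0: False
    have yn: "y < n" using r0 prems by simp
    have fin: "finite (Reg (a,b,c,d) y n)" by (rule finite_Reg)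
    consider (sh) "a \<noteq> 0 \<and> b \<noteq> 0 \<and> c \<noteq> 0 \<and> d \<noteq> 0" | (a0) "a = 0" | (b0) "a \<noteq> 0" "b = 0"
      | (c0) "a \<noteq> 0" "b \<noteq> 0" "c = 0" | (d0) "a \<noteq> 0" "b \<noteq> 0" "c \<noteq> 0" "d = 0" by blast
    then show ?thesis
    proof cases
      case sh
      have G: "G r (a,b,c,d) = G (r-1) (a-1,b-1,c-1,d-1)" using r0 sh by (subst G.simps) simp
      have "card (tilings (Reg (a-1,b-1,c-1,d-1) (Suc y) n)) = G (r-1) (a-1,b-1,c-1,d-1)"
        apply (rule "1.IH"(1)[OF r0 sh])
        using prems r0 bnd by (auto simp: pv.simps)
      then show ?thesis using G Reg_shift sh by simp
    next
      case a0
      have G: "G r (a,b,c,d) = G r (3,b,c,d) + (if b = 0 \<and> c = 0 then G r (1,1,1,d) else 0)"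
        using r0 a0 by (subst G.simps) simp
      have mem: "(0,y) \<in> Reg (a,b,c,d) y n" using yn a0 by (simp add: Reg_def pv.simps)
      have minc: "\<forall>(x,j)\<in>Reg (a,b,c,d) y n. y<j \<or> (j=y \<and> 0 \<le> x)" by (rule Reg_min) simp
      have V: "(if cell_rect 0 y 1 3 \<subseteq> Reg (a,b,c,d) y n
            then card (tilings (Reg (a,b,c,d) y n - cell_rect 0 y 1 3)) else 0) = G r (3,b,c,d)"
      proof (cases "3 \<le> r")
        case True
        then have "cell_rect 0 y 1 3 \<subseteq> Reg (a,b,c,d) y n" using V_sub[of 0 "(a,b,c,d)"] a0 prems
          by (simp add: pv.simps)
        moreover have "card (tilings (Reg (3,b,c,d) y n)) = G r (3,b,c,d)"
          apply (rule "1.IH"(2)[OF r0 _ a0])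
          using a0 apply simp
          using prems True bnd by (auto simp: pv.simps)
        ultimately show ?thesis using RV0 a0 by simp
      next
        case False
        then have "\<not> cell_rect 0 y 1 3 \<subseteq> Reg (a,b,c,d) y n" using V_sub[of 0 "(a,b,c,d)"] a0 prems
          by (simp add: pv.simps)
        moreover have "G r (3,b,c,d) = 0" using G_zero[of 0 r "(3,b,c,d)"] False by (simp add: pv.simps)
        ultimately show ?thesis by simp
      qed
      have H: "(if cell_rect 0 y 3 1 \<subseteq> Reg (a,b,c,d) y n
            then card (tilings (Reg (a,b,c,d) y n - cell_rect 0 y 3 1)) else 0)
            = (if b = 0 \<and> c = 0 then G r (1,1,1,d) else 0)"
      proof (cases "b = 0 \<and> c = 0")
        case True
        then have "cell_rect 0 y 3 1 \<subseteq> Reg (a,b,c,d) y n" using H0_sub[OF yn] a0 by simp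
        moreover have "card (tilings (Reg (1,1,1,d) y n)) = G r (1,1,1,d)"
          apply (rule "1.IH"(3)[OF r0 _ a0 True])
          using a0 apply simp
          using prems True bnd r0 by (auto simp: pv.simps)
        ultimately show ?thesis using RH0 a0 True by simp
      next
        case False
        then have "\<not> cell_rect 0 y 3 1 \<subseteq> Reg (a,b,c,d) y n" using H0_sub[OF yn, of b c d] a0 by simp
        then show ?thesis using False by auto
      qed
      show ?thesis using split_min[OF fin mem minc] V H G by simp
    next
      case b0
      have G: "G r (a,b,c,d) = G r (a,3,c,d) + (if c = 0 \<and> d = 0 then G r (a,1,1,1) else 0)"
        using r0 b0 by (subst G.simps) simp
      have mem: "(1,y) \<in> Reg (a,b,c,d) y n" using yn b0 by (simp add: Reg_def pv.simps)
      have minc: "\<forall>(x,j)\<in>Reg (a,b,c,d) y n. y<j \<or> (j=y \<and> 1 \<le> x)"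
        by (rule Reg_min) (use b0 in \<open>auto simp: pv.simps\<close>)
      have V: "(if cell_rect 1 y 1 3 \<subseteq> Reg (a,b,c,d) y n
            then card (tilings (Reg (a,b,c,d) y n - cell_rect 1 y 1 3)) else 0) = G r (a,3,c,d)"
      proof (cases "3 \<le> r")
        case True
        then have "cell_rect 1 y 1 3 \<subseteq> Reg (a,b,c,d) y n" using V_sub[of 1 "(a,b,c,d)"] b0 prems
          by (simp add: pv.simps)
        moreover have "card (tilings (Reg (a,3,c,d) y n)) = G r (a,3,c,d)"
          by (rule "1.IH"(4)) (use r0 b0 prems True bnd in \<open>auto simp: pv.simps\<close>)
        ultimately show ?thesis using RV1 b0 by simp
      next
        case False
        then have "\<not> cell_rect 1 y 1 3 \<subseteq> Reg (a,b,c,d) y n" using V_sub[of 1 "(a,b,c,d)"] b0 prems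
          by (simp add: pv.simps)
        moreover have "G r (a,3,c,d) = 0" using G_zero[of 1 r "(a,3,c,d)"] False by (simp add: pv.simps)
        ultimately show ?thesis by simp
      qed
      have H: "(if cell_rect 1 y 3 1 \<subseteq> Reg (a,b,c,d) y n
            then card (tilings (Reg (a,b,c,d) y n - cell_rect 1 y 3 1)) else 0)
            = (if c = 0 \<and> d = 0 then G r (a,1,1,1) else 0)"
      proof (cases "c = 0 \<and> d = 0")
        case True
        then have "cell_rect 1 y 3 1 \<subseteq> Reg (a,b,c,d) y n" using H1_sub[OF yn] b0 by simp
        moreover have "card (tilings (Reg (a,1,1,1) y n)) = G r (a,1,1,1)"
          by (rule "1.IH"(5)) (use r0 b0 prems True bnd in \<open>auto simp: pv.simps\<close>)
        ultimately show ?thesis using RH1 b0 True by simp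
      next
        case False
        then have "\<not> cell_rect 1 y 3 1 \<subseteq> Reg (a,b,c,d) y n" using H1_sub[OF yn, of a c d] b0 by simp
        then show ?thesis using False by auto
      qed
      show ?thesis using split_min[OF fin mem minc] V H G by simp
    next
      case c0
      have G: "G r (a,b,c,d) = G r (a,b,3,d)"
        using r0 c0 by (subst G.simps) simp
      have mem: "(2,y) \<in> Reg (a,b,c,d) y n" using yn c0 by (simp add: Reg_def pv.simps)
      have minc: "\<forall>(x,j)\<in>Reg (a,b,c,d) y n. y<j \<or> (j=y \<and> 2 \<le> x)"
        by (rule Reg_min) (use c0 in \<open>auto simp: pv.simps less_Suc_eq numeral_eq_Suc\<close>)
      have V: "(if cell_rect 2 y 1 3 \<subseteq> Reg (a,b,c,d) y n
            then card (tilings (Reg (a,b,c,d) y n - cell_rect 2 y 1 3)) else 0) = G r (a,b,3,d)"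
      proof (cases "3 \<le> r")
        case True
        then have "cell_rect 2 y 1 3 \<subseteq> Reg (a,b,c,d) y n" using V_sub[of 2 "(a,b,c,d)"] c0 prems
          by (simp add: pv.simps)
        moreover have "card (tilings (Reg (a,b,3,d) y n)) = G r (a,b,3,d)"
          by (rule "1.IH"(6)) (use r0 c0 prems True bnd in \<open>auto simp: pv.simps\<close>)
        ultimately show ?thesis using RV2 c0 by simp
      next
        case False
        then have "\<not> cell_rect 2 y 1 3 \<subseteq> Reg (a,b,c,d) y n" using V_sub[of 2 "(a,b,c,d)"] c0 prems
          by (simp add: pv.simps)
        moreover have "G r (a,b,3,d) = 0" using G_zero[of 2 r "(a,b,3,d)"] False by (simp add: pv.simps)
        ultimately show ?thesis by simp
      qed
      have H: "\<not> cell_rect 2 y 3 1 \<subseteq> Reg (a,b,c,d) y n" by (rule H2_sub)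
      show ?thesis using split_min[OF fin mem minc] V H G by simp
    next
      case d0
      have G: "G r (a,b,c,d) = G r (a,b,c,3)"
        using r0 d0 by (subst G.simps) simp
      have mem: "(3,y) \<in> Reg (a,b,c,d) y n" using yn d0 by (simp add: Reg_def pv.simps)
      have minc: "\<forall>(x,j)\<in>Reg (a,b,c,d) y n. y<j \<or> (j=y \<and> 3 \<le> x)"
        by (rule Reg_min) (use d0 in \<open>auto simp: pv.simps less_Suc_eq numeral_eq_Suc\<close>)
      have V: "(if cell_rect 3 y 1 3 \<subseteq> Reg (a,b,c,d) y n
            then card (tilings (Reg (a,b,c,d) y n - cell_rect 3 y 1 3)) else 0) = G r (a,b,c,3)"
      proof (cases "3 \<le> r")
        case True
        then have "cell_rect 3 y 1 3 \<subseteq> Reg (a,b,c,d) y n" using V_sub[of 3 "(a,b,c,d)"] d0 prems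
          by (simp add: pv.simps)
        moreover have "card (tilings (Reg (a,b,c,3) y n)) = G r (a,b,c,3)"
          by (rule "1.IH"(7)) (use r0 d0 prems True bnd in \<open>auto simp: pv.simps\<close>)
        ultimately show ?thesis using RV3 d0 by simp
      next
        case False
        then have "\<not> cell_rect 3 y 1 3 \<subseteq> Reg (a,b,c,d) y n" using V_sub[of 3 "(a,b,c,d)"] d0 prems
          by (simp add: pv.simps)
        moreover have "G r (a,b,c,3) = 0" using G_zero[of 3 r "(a,b,c,3)"] False by (simp add: pv.simps)
        ultimately show ?thesis by simp
      qed
      have H: "\<not> cell_rect 3 y 3 1 \<subseteq> Reg (a,b,c,d) y n" by (rule H3_sub)
      show ?thesis using split_min[OF fin mem minc] V H G by simp
    qed
  qed
qed




lemma G_0: "G 0 (a,b,c,d) = (if a=0 \<and> b=0 \<and> c=0 \<and> d=0 then 1 else 0)"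
  by (subst G.simps) simp

lemma G_Suc: "G (Suc r) (a,b,c,d) = (if a \<noteq> 0 \<and> b \<noteq> 0 \<and> c \<noteq> 0 \<and> d \<noteq> 0 then G r (a-1,b-1,c-1,d-1)
   else if a = 0 then G (Suc r) (3,b,c,d) + (if b = 0 \<and> c = 0 then G (Suc r) (1,1,1,d) else 0)
   else if b = 0 then G (Suc r) (a,3,c,d) + (if c = 0 \<and> d = 0 then G (Suc r) (a,1,1,1) else 0)
   else if c = 0 then G (Suc r) (a,b,3,d)
   else G (Suc r) (a,b,c,3))"
  by (subst G.simps) simp

lemma two: "Suc (Suc 0) = (2::nat)" by simp

lemma st0: "G (Suc r) (0,0,0,0) = G r (2,2,2,2) + G r (2,0,0,0) + G r (0,0,0,2)"
  by (simp add: G_Suc)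

lemma st1: "G (Suc r) (2,2,2,2) = G r (Suc 0,Suc 0,Suc 0,Suc 0)"
  by (simp add: G_Suc)

lemma st2: "G (Suc r) (2,0,0,0) = G r (Suc 0,2,2,2) + G r (Suc 0,0,0,0)"
  by (simp add: G_Suc)

lemma st3: "G (Suc r) (0,0,0,2) = G r (2,2,2,Suc 0) + G r (0,0,0,Suc 0)"
  by (simp add: G_Suc)

lemma st4: "G (Suc r) (Suc 0,Suc 0,Suc 0,Suc 0) = G r (0,0,0,0)"
  by (simp add: G_Suc)

lemma st5: "G (Suc r) (Suc 0,2,2,2) = G r (0,Suc 0,Suc 0,Suc 0)"
  by (simp add: G_Suc)

lemma st6: "G (Suc r) (Suc 0,0,0,0) = G r (0,2,2,2) + G r (0,0,0,0)"
  by (simp add: G_Suc)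

lemma st7: "G (Suc r) (2,2,2,Suc 0) = G r (Suc 0,Suc 0,Suc 0,0)"
  by (simp add: G_Suc)

lemma st8: "G (Suc r) (0,0,0,Suc 0) = G r (2,2,2,0) + G r (0,0,0,0)"
  by (simp add: G_Suc)

lemma st9: "G (Suc r) (0,Suc 0,Suc 0,Suc 0) = G r (2,0,0,0)"
  by (simp add: G_Suc)

lemma st10: "G (Suc r) (0,2,2,2) = G r (2,Suc 0,Suc 0,Suc 0)"
  by (simp add: G_Suc)

lemma st11: "G (Suc r) (Suc 0,Suc 0,Suc 0,0) = G r (0,0,0,2)"
  by (simp add: G_Suc)

lemma st12: "G (Suc r) (2,2,2,0) = G r (Suc 0,Suc 0,Suc 0,2)"
  by (simp add: G_Suc)

lemma st13: "G (Suc r) (2,Suc 0,Suc 0,Suc 0) = G r (Suc 0,0,0,0)"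
  by (simp add: G_Suc)

lemma st14: "G (Suc r) (Suc 0,Suc 0,Suc 0,2) = G r (0,0,0,Suc 0)"
  by (simp add: G_Suc)

lemma v0_0: "G 0 (0,0,0,0) = 1" by (simp add: G_0)

lemma v0_1: "G 0 (2,2,2,2) = 0" by (simp add: G_0)

lemma v0_2: "G 0 (2,0,0,0) = 0" by (simp add: G_0)

lemma v0_3: "G 0 (0,0,0,2) = 0" by (simp add: G_0)

lemma v0_4: "G 0 (Suc 0,Suc 0,Suc 0,Suc 0) = 0" by (simp add: G_0)

lemma v0_5: "G 0 (Suc 0,2,2,2) = 0" by (simp add: G_0)

lemma v0_6: "G 0 (Suc 0,0,0,0) = 0" by (simp add: G_0)

lemma v0_7: "G 0 (2,2,2,Suc 0) = 0" by (simp add: G_0)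

lemma v0_8: "G 0 (0,0,0,Suc 0) = 0" by (simp add: G_0)

lemma v0_9: "G 0 (0,Suc 0,Suc 0,Suc 0) = 0" by (simp add: G_0)

lemma v0_10: "G 0 (0,2,2,2) = 0" by (simp add: G_0)

lemma v0_11: "G 0 (Suc 0,Suc 0,Suc 0,0) = 0" by (simp add: G_0)

lemma v0_12: "G 0 (2,2,2,0) = 0" by (simp add: G_0)

lemma v0_13: "G 0 (2,Suc 0,Suc 0,Suc 0) = 0" by (simp add: G_0)

lemma v0_14: "G 0 (Suc 0,Suc 0,Suc 0,2) = 0" by (simp add: G_0)

lemma v1_0: "G (Suc 0) (0,0,0,0) = 0" using st0[of "0"] by (simp add: v0_3 v0_1 v0_2)

lemma v1_1: "G (Suc 0) (2,2,2,2) = 0" using st1[of "0"] by (simp add: v0_4)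

lemma v1_2: "G (Suc 0) (2,0,0,0) = 0" using st2[of "0"] by (simp add: v0_6 v0_5)

lemma v1_3: "G (Suc 0) (0,0,0,2) = 0" using st3[of "0"] by (simp add: v0_8 v0_7)

lemma v1_4: "G (Suc 0) (Suc 0,Suc 0,Suc 0,Suc 0) = 1" using st4[of "0"] by (simp add: v0_0)

lemma v1_5: "G (Suc 0) (Suc 0,2,2,2) = 0" using st5[of "0"] by (simp add: v0_9)

lemma v1_6: "G (Suc 0) (Suc 0,0,0,0) = 1" using st6[of "0"] by (simp add: v0_10 v0_0)

lemma v1_7: "G (Suc 0) (2,2,2,Suc 0) = 0" using st7[of "0"] by (simp add: v0_11)

lemma v1_8: "G (Suc 0) (0,0,0,Suc 0) = 1" using st8[of "0"] by (simp add: v0_0 v0_12)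

lemma v1_9: "G (Suc 0) (0,Suc 0,Suc 0,Suc 0) = 0" using st9[of "0"] by (simp add: v0_2)

lemma v1_10: "G (Suc 0) (0,2,2,2) = 0" using st10[of "0"] by (simp add: v0_13)

lemma v1_11: "G (Suc 0) (Suc 0,Suc 0,Suc 0,0) = 0" using st11[of "0"] by (simp add: v0_3)

lemma v1_12: "G (Suc 0) (2,2,2,0) = 0" using st12[of "0"] by (simp add: v0_14)

lemma v1_13: "G (Suc 0) (2,Suc 0,Suc 0,Suc 0) = 0" using st13[of "0"] by (simp add: v0_6)

lemma v1_14: "G (Suc 0) (Suc 0,Suc 0,Suc 0,2) = 0" using st14[of "0"] by (simp add: v0_8)

lemma v2_0: "G (2) (0,0,0,0) = 0" using st0[of "1"] by (simp add: v1_3 v1_1 v1_2 two)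

lemma v2_1: "G (2) (2,2,2,2) = 1" using st1[of "1"] by (simp add: v1_4 two)

lemma v2_2: "G (2) (2,0,0,0) = 1" using st2[of "1"] by (simp add: v1_6 v1_5 two)

lemma v2_3: "G (2) (0,0,0,2) = 1" using st3[of "1"] by (simp add: v1_8 v1_7 two)

lemma v2_4: "G (2) (Suc 0,Suc 0,Suc 0,Suc 0) = 0" using st4[of "1"] by (simp add: v1_0 two)

lemma v2_5: "G (2) (Suc 0,2,2,2) = 0" using st5[of "1"] by (simp add: v1_9 two)

lemma v2_6: "G (2) (Suc 0,0,0,0) = 0" using st6[of "1"] by (simp add: v1_10 v1_0 two)

lemma v2_7: "G (2) (2,2,2,Suc 0) = 0" using st7[of "1"] by (simp add: v1_11 two)

lemma v2_8: "G (2) (0,0,0,Suc 0) = 0" using st8[of "1"] by (simp add: v1_0 v1_12 two)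

lemma v2_9: "G (2) (0,Suc 0,Suc 0,Suc 0) = 0" using st9[of "1"] by (simp add: v1_2 two)

lemma v2_10: "G (2) (0,2,2,2) = 0" using st10[of "1"] by (simp add: v1_13 two)

lemma v2_11: "G (2) (Suc 0,Suc 0,Suc 0,0) = 0" using st11[of "1"] by (simp add: v1_3 two)

lemma v2_12: "G (2) (2,2,2,0) = 0" using st12[of "1"] by (simp add: v1_14 two)

lemma v2_13: "G (2) (2,Suc 0,Suc 0,Suc 0) = 1" using st13[of "1"] by (simp add: v1_6 two)

lemma v2_14: "G (2) (Suc 0,Suc 0,Suc 0,2) = 1" using st14[of "1"] by (simp add: v1_8 two)

lemma v3_0: "G (3) (0,0,0,0) = 3" using st0[of "2"] by (simp add: v2_3 v2_1 v2_2)

lemma v3_1: "G (3) (2,2,2,2) = 0" using st1[of "2"] by (simp add: v2_4)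

lemma v3_2: "G (3) (2,0,0,0) = 0" using st2[of "2"] by (simp add: v2_6 v2_5)

lemma v3_3: "G (3) (0,0,0,2) = 0" using st3[of "2"] by (simp add: v2_8 v2_7)

lemma v3_4: "G (3) (Suc 0,Suc 0,Suc 0,Suc 0) = 0" using st4[of "2"] by (simp add: v2_0)

lemma v3_5: "G (3) (Suc 0,2,2,2) = 0" using st5[of "2"] by (simp add: v2_9)

lemma v3_6: "G (3) (Suc 0,0,0,0) = 0" using st6[of "2"] by (simp add: v2_10 v2_0)

lemma v3_7: "G (3) (2,2,2,Suc 0) = 0" using st7[of "2"] by (simp add: v2_11)

lemma v3_8: "G (3) (0,0,0,Suc 0) = 0" using st8[of "2"] by (simp add: v2_0 v2_12)

lemma v3_9: "G (3) (0,Suc 0,Suc 0,Suc 0) = 1" using st9[of "2"] by (simp add: v2_2)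

lemma v3_10: "G (3) (0,2,2,2) = 1" using st10[of "2"] by (simp add: v2_13)

lemma v3_11: "G (3) (Suc 0,Suc 0,Suc 0,0) = 1" using st11[of "2"] by (simp add: v2_3)

lemma v3_12: "G (3) (2,2,2,0) = 1" using st12[of "2"] by (simp add: v2_14)

lemma v3_13: "G (3) (2,Suc 0,Suc 0,Suc 0) = 0" using st13[of "2"] by (simp add: v2_6)

lemma v3_14: "G (3) (Suc 0,Suc 0,Suc 0,2) = 0" using st14[of "2"] by (simp add: v2_8)

lemma v4_0: "G (4) (0,0,0,0) = 0" using st0[of "3"] by (simp add: v3_3 v3_1 v3_2)

lemma v4_1: "G (4) (2,2,2,2) = 0" using st1[of "3"] by (simp add: v3_4)

lemma v4_2: "G (4) (2,0,0,0) = 0" using st2[of "3"] by (simp add: v3_6 v3_5)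

lemma v4_3: "G (4) (0,0,0,2) = 0" using st3[of "3"] by (simp add: v3_8 v3_7)

lemma v4_4: "G (4) (Suc 0,Suc 0,Suc 0,Suc 0) = 3" using st4[of "3"] by (simp add: v3_0)

lemma v4_5: "G (4) (Suc 0,2,2,2) = 1" using st5[of "3"] by (simp add: v3_9)

lemma v4_6: "G (4) (Suc 0,0,0,0) = 4" using st6[of "3"] by (simp add: v3_10 v3_0)

lemma v4_7: "G (4) (2,2,2,Suc 0) = 1" using st7[of "3"] by (simp add: v3_11)

lemma v4_8: "G (4) (0,0,0,Suc 0) = 4" using st8[of "3"] by (simp add: v3_0 v3_12)

lemma v4_9: "G (4) (0,Suc 0,Suc 0,Suc 0) = 0" using st9[of "3"] by (simp add: v3_2)

lemma v4_10: "G (4) (0,2,2,2) = 0" using st10[of "3"] by (simp add: v3_13)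

lemma v4_11: "G (4) (Suc 0,Suc 0,Suc 0,0) = 0" using st11[of "3"] by (simp add: v3_3)

lemma v4_12: "G (4) (2,2,2,0) = 0" using st12[of "3"] by (simp add: v3_14)

lemma v4_13: "G (4) (2,Suc 0,Suc 0,Suc 0) = 0" using st13[of "3"] by (simp add: v3_6)

lemma v4_14: "G (4) (Suc 0,Suc 0,Suc 0,2) = 0" using st14[of "3"] by (simp add: v3_8)

lemma v5_0: "G (5) (0,0,0,0) = 0" using st0[of "4"] by (simp add: v4_3 v4_1 v4_2)

lemma v5_1: "G (5) (2,2,2,2) = 3" using st1[of "4"] by (simp add: v4_4)

lemma v5_2: "G (5) (2,0,0,0) = 5" using st2[of "4"] by (simp add: v4_6 v4_5)

lemma v5_3: "G (5) (0,0,0,2) = 5" using st3[of "4"] by (simp add: v4_8 v4_7)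

lemma v5_4: "G (5) (Suc 0,Suc 0,Suc 0,Suc 0) = 0" using st4[of "4"] by (simp add: v4_0)

lemma v5_5: "G (5) (Suc 0,2,2,2) = 0" using st5[of "4"] by (simp add: v4_9)

lemma v5_6: "G (5) (Suc 0,0,0,0) = 0" using st6[of "4"] by (simp add: v4_10 v4_0)

lemma v5_7: "G (5) (2,2,2,Suc 0) = 0" using st7[of "4"] by (simp add: v4_11)

lemma v5_8: "G (5) (0,0,0,Suc 0) = 0" using st8[of "4"] by (simp add: v4_0 v4_12)

lemma v5_9: "G (5) (0,Suc 0,Suc 0,Suc 0) = 0" using st9[of "4"] by (simp add: v4_2)

lemma v5_10: "G (5) (0,2,2,2) = 0" using st10[of "4"] by (simp add: v4_13)

lemma v5_11: "G (5) (Suc 0,Suc 0,Suc 0,0) = 0" using st11[of "4"] by (simp add: v4_3)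

lemma v5_12: "G (5) (2,2,2,0) = 0" using st12[of "4"] by (simp add: v4_14)

lemma v5_13: "G (5) (2,Suc 0,Suc 0,Suc 0) = 4" using st13[of "4"] by (simp add: v4_6)

lemma v5_14: "G (5) (Suc 0,Suc 0,Suc 0,2) = 4" using st14[of "4"] by (simp add: v4_8)

lemma v6_0: "G (6) (0,0,0,0) = 13" using st0[of "5"] by (simp add: v5_3 v5_1 v5_2)

lemma v6_1: "G (6) (2,2,2,2) = 0" using st1[of "5"] by (simp add: v5_4)

lemma v6_2: "G (6) (2,0,0,0) = 0" using st2[of "5"] by (simp add: v5_6 v5_5)

lemma v6_3: "G (6) (0,0,0,2) = 0" using st3[of "5"] by (simp add: v5_8 v5_7)

lemma v6_4: "G (6) (Suc 0,Suc 0,Suc 0,Suc 0) = 0" using st4[of "5"] by (simp add: v5_0)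

lemma v6_5: "G (6) (Suc 0,2,2,2) = 0" using st5[of "5"] by (simp add: v5_9)

lemma v6_6: "G (6) (Suc 0,0,0,0) = 0" using st6[of "5"] by (simp add: v5_10 v5_0)

lemma v6_7: "G (6) (2,2,2,Suc 0) = 0" using st7[of "5"] by (simp add: v5_11)

lemma v6_8: "G (6) (0,0,0,Suc 0) = 0" using st8[of "5"] by (simp add: v5_0 v5_12)

lemma v6_9: "G (6) (0,Suc 0,Suc 0,Suc 0) = 5" using st9[of "5"] by (simp add: v5_2)

lemma v6_10: "G (6) (0,2,2,2) = 4" using st10[of "5"] by (simp add: v5_13)

lemma v6_11: "G (6) (Suc 0,Suc 0,Suc 0,0) = 5" using st11[of "5"] by (simp add: v5_3)

lemma v6_12: "G (6) (2,2,2,0) = 4" using st12[of "5"] by (simp add: v5_14)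

lemma v6_13: "G (6) (2,Suc 0,Suc 0,Suc 0) = 0" using st13[of "5"] by (simp add: v5_6)

lemma v6_14: "G (6) (Suc 0,Suc 0,Suc 0,2) = 0" using st14[of "5"] by (simp add: v5_8)

lemma v7_0: "G (7) (0,0,0,0) = 0" using st0[of "6"] by (simp add: v6_3 v6_1 v6_2)

lemma v7_1: "G (7) (2,2,2,2) = 0" using st1[of "6"] by (simp add: v6_4)

lemma v7_2: "G (7) (2,0,0,0) = 0" using st2[of "6"] by (simp add: v6_6 v6_5)

lemma v7_3: "G (7) (0,0,0,2) = 0" using st3[of "6"] by (simp add: v6_8 v6_7)

lemma v7_4: "G (7) (Suc 0,Suc 0,Suc 0,Suc 0) = 13" using st4[of "6"] by (simp add: v6_0)

lemma v7_5: "G (7) (Suc 0,2,2,2) = 5" using st5[of "6"] by (simp add: v6_9)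

lemma v7_6: "G (7) (Suc 0,0,0,0) = 17" using st6[of "6"] by (simp add: v6_10 v6_0)

lemma v7_7: "G (7) (2,2,2,Suc 0) = 5" using st7[of "6"] by (simp add: v6_11)

lemma v7_8: "G (7) (0,0,0,Suc 0) = 17" using st8[of "6"] by (simp add: v6_0 v6_12)

lemma v7_9: "G (7) (0,Suc 0,Suc 0,Suc 0) = 0" using st9[of "6"] by (simp add: v6_2)

lemma v7_10: "G (7) (0,2,2,2) = 0" using st10[of "6"] by (simp add: v6_13)

lemma v7_11: "G (7) (Suc 0,Suc 0,Suc 0,0) = 0" using st11[of "6"] by (simp add: v6_3)

lemma v7_12: "G (7) (2,2,2,0) = 0" using st12[of "6"] by (simp add: v6_14)

lemma v7_13: "G (7) (2,Suc 0,Suc 0,Suc 0) = 0" using st13[of "6"] by (simp add: v6_6)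

lemma v7_14: "G (7) (Suc 0,Suc 0,Suc 0,2) = 0" using st14[of "6"] by (simp add: v6_8)

lemma v8_0: "G (8) (0,0,0,0) = 0" using st0[of "7"] by (simp add: v7_3 v7_1 v7_2)

lemma v8_1: "G (8) (2,2,2,2) = 13" using st1[of "7"] by (simp add: v7_4)

lemma v8_2: "G (8) (2,0,0,0) = 22" using st2[of "7"] by (simp add: v7_6 v7_5)

lemma v8_3: "G (8) (0,0,0,2) = 22" using st3[of "7"] by (simp add: v7_8 v7_7)

lemma v8_4: "G (8) (Suc 0,Suc 0,Suc 0,Suc 0) = 0" using st4[of "7"] by (simp add: v7_0)

lemma v8_5: "G (8) (Suc 0,2,2,2) = 0" using st5[of "7"] by (simp add: v7_9)

lemma v8_6: "G (8) (Suc 0,0,0,0) = 0" using st6[of "7"] by (simp add: v7_10 v7_0)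

lemma v8_7: "G (8) (2,2,2,Suc 0) = 0" using st7[of "7"] by (simp add: v7_11)

lemma v8_8: "G (8) (0,0,0,Suc 0) = 0" using st8[of "7"] by (simp add: v7_0 v7_12)

lemma v8_9: "G (8) (0,Suc 0,Suc 0,Suc 0) = 0" using st9[of "7"] by (simp add: v7_2)

lemma v8_10: "G (8) (0,2,2,2) = 0" using st10[of "7"] by (simp add: v7_13)

lemma v8_11: "G (8) (Suc 0,Suc 0,Suc 0,0) = 0" using st11[of "7"] by (simp add: v7_3)

lemma v8_12: "G (8) (2,2,2,0) = 0" using st12[of "7"] by (simp add: v7_14)

lemma v8_13: "G (8) (2,Suc 0,Suc 0,Suc 0) = 17" using st13[of "7"] by (simp add: v7_6)

lemma v8_14: "G (8) (Suc 0,Suc 0,Suc 0,2) = 17" using st14[of "7"] by (simp add: v7_8)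

lemma v9_0: "G (9) (0,0,0,0) = 57" using st0[of "8"] by (simp add: v8_3 v8_1 v8_2)

lemma v9_1: "G (9) (2,2,2,2) = 0" using st1[of "8"] by (simp add: v8_4)

lemma v9_2: "G (9) (2,0,0,0) = 0" using st2[of "8"] by (simp add: v8_6 v8_5)

lemma v9_3: "G (9) (0,0,0,2) = 0" using st3[of "8"] by (simp add: v8_8 v8_7)

lemma v9_4: "G (9) (Suc 0,Suc 0,Suc 0,Suc 0) = 0" using st4[of "8"] by (simp add: v8_0)

lemma v9_5: "G (9) (Suc 0,2,2,2) = 0" using st5[of "8"] by (simp add: v8_9)

lemma v9_6: "G (9) (Suc 0,0,0,0) = 0" using st6[of "8"] by (simp add: v8_10 v8_0)

lemma v9_7: "G (9) (2,2,2,Suc 0) = 0" using st7[of "8"] by (simp add: v8_11)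

lemma v9_8: "G (9) (0,0,0,Suc 0) = 0" using st8[of "8"] by (simp add: v8_0 v8_12)

lemma v9_9: "G (9) (0,Suc 0,Suc 0,Suc 0) = 22" using st9[of "8"] by (simp add: v8_2)

lemma v9_10: "G (9) (0,2,2,2) = 17" using st10[of "8"] by (simp add: v8_13)

lemma v9_11: "G (9) (Suc 0,Suc 0,Suc 0,0) = 22" using st11[of "8"] by (simp add: v8_3)

lemma v9_12: "G (9) (2,2,2,0) = 17" using st12[of "8"] by (simp add: v8_14)

lemma v9_13: "G (9) (2,Suc 0,Suc 0,Suc 0) = 0" using st13[of "8"] by (simp add: v8_6)

lemma v9_14: "G (9) (Suc 0,Suc 0,Suc 0,2) = 0" using st14[of "8"] by (simp add: v8_8)

definition H :: "nat \<Rightarrow> nat\<times>nat\<times>nat\<times>nat \<Rightarrow> int" where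
  "H r q = int (G (r+9) q) + 3 * int (G (r+3) q) - 5 * int (G (r+6) q) - int (G r q)"

lemma Hs0: "H (Suc r) (0,0,0,0) = H r (2,2,2,2) + H r (2,0,0,0) + H r (0,0,0,2)"
  by (simp only: H_def add_Suc st0; simp add: algebra_simps)

lemma Hs1: "H (Suc r) (2,2,2,2) = H r (Suc 0,Suc 0,Suc 0,Suc 0)"
  by (simp only: H_def add_Suc st1; simp add: algebra_simps)

lemma Hs2: "H (Suc r) (2,0,0,0) = H r (Suc 0,2,2,2) + H r (Suc 0,0,0,0)"
  by (simp only: H_def add_Suc st2; simp add: algebra_simps)

lemma Hs3: "H (Suc r) (0,0,0,2) = H r (2,2,2,Suc 0) + H r (0,0,0,Suc 0)"
  by (simp only: H_def add_Suc st3; simp add: algebra_simps)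

lemma Hs4: "H (Suc r) (Suc 0,Suc 0,Suc 0,Suc 0) = H r (0,0,0,0)"
  by (simp only: H_def add_Suc st4; simp add: algebra_simps)

lemma Hs5: "H (Suc r) (Suc 0,2,2,2) = H r (0,Suc 0,Suc 0,Suc 0)"
  by (simp only: H_def add_Suc st5; simp add: algebra_simps)

lemma Hs6: "H (Suc r) (Suc 0,0,0,0) = H r (0,2,2,2) + H r (0,0,0,0)"
  by (simp only: H_def add_Suc st6; simp add: algebra_simps)

lemma Hs7: "H (Suc r) (2,2,2,Suc 0) = H r (Suc 0,Suc 0,Suc 0,0)"
  by (simp only: H_def add_Suc st7; simp add: algebra_simps)

lemma Hs8: "H (Suc r) (0,0,0,Suc 0) = H r (2,2,2,0) + H r (0,0,0,0)"
  by (simp only: H_def add_Suc st8; simp add: algebra_simps)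

lemma Hs9: "H (Suc r) (0,Suc 0,Suc 0,Suc 0) = H r (2,0,0,0)"
  by (simp only: H_def add_Suc st9; simp add: algebra_simps)

lemma Hs10: "H (Suc r) (0,2,2,2) = H r (2,Suc 0,Suc 0,Suc 0)"
  by (simp only: H_def add_Suc st10; simp add: algebra_simps)

lemma Hs11: "H (Suc r) (Suc 0,Suc 0,Suc 0,0) = H r (0,0,0,2)"
  by (simp only: H_def add_Suc st11; simp add: algebra_simps)

lemma Hs12: "H (Suc r) (2,2,2,0) = H r (Suc 0,Suc 0,Suc 0,2)"
  by (simp only: H_def add_Suc st12; simp add: algebra_simps)

lemma Hs13: "H (Suc r) (2,Suc 0,Suc 0,Suc 0) = H r (Suc 0,0,0,0)"
  by (simp only: H_def add_Suc st13; simp add: algebra_simps)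

lemma Hs14: "H (Suc r) (Suc 0,Suc 0,Suc 0,2) = H r (0,0,0,Suc 0)"
  by (simp only: H_def add_Suc st14; simp add: algebra_simps)

lemma Hrec: "H r (0,0,0,0) = 0 \<and>
   H r (2,2,2,2) = 0 \<and>
   H r (2,0,0,0) = 0 \<and>
   H r (0,0,0,2) = 0 \<and>
   H r (Suc 0,Suc 0,Suc 0,Suc 0) = 0 \<and>
   H r (Suc 0,2,2,2) = 0 \<and>
   H r (Suc 0,0,0,0) = 0 \<and>
   H r (2,2,2,Suc 0) = 0 \<and>
   H r (0,0,0,Suc 0) = 0 \<and>
   H r (0,Suc 0,Suc 0,Suc 0) = 0 \<and>
   H r (0,2,2,2) = 0 \<and>
   H r (Suc 0,Suc 0,Suc 0,0) = 0 \<and>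
   H r (2,2,2,0) = 0 \<and>
   H r (2,Suc 0,Suc 0,Suc 0) = 0 \<and>
   H r (Suc 0,Suc 0,Suc 0,2) = 0"
proof (induction r)
  case 0
  show ?case by (simp add: H_def v0_0 v0_1 v0_2 v0_3 v0_4 v0_5 v0_6 v0_7 v0_8 v0_9 v0_10 v0_11 v0_12 v0_13 v0_14 v1_0 v1_1 v1_2 v1_3 v1_4 v1_5 v1_6 v1_7 v1_8 v1_9 v1_10 v1_11 v1_12 v1_13 v1_14 v2_0 v2_1 v2_2 v2_3 v2_4 v2_5 v2_6 v2_7 v2_8 v2_9 v2_10 v2_11 v2_12 v2_13 v2_14 v3_0 v3_1 v3_2 v3_3 v3_4 v3_5 v3_6 v3_7 v3_8 v3_9 v3_10 v3_11 v3_12 v3_13 v3_14 v4_0 v4_1 v4_2 v4_3 v4_4 v4_5 v4_6 v4_7 v4_8 v4_9 v4_10 v4_11 v4_12 v4_13 v4_14 v5_0 v5_1 v5_2 v5_3 v5_4 v5_5 v5_6 v5_7 v5_8 v5_9 v5_10 v5_11 v5_12 v5_13 v5_14 v6_0 v6_1 v6_2 v6_3 v6_4 v6_5 v6_6 v6_7 v6_8 v6_9 v6_10 v6_11 v6_12 v6_13 v6_14 v7_0 v7_1 v7_2 v7_3 v7_4 v7_5 v7_6 v7_7 v7_8 v7_9 v7_10 v7_11 v7_12 v7_13 v7_14 v8_0 v8_1 v8_2 v8_3 v8_4 v8_5 v8_6 v8_7 v8_8 v8_9 v8_10 v8_11 v8_12 v8_13 v8_14 v9_0 v9_1 v9_2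 v9_3 v9_4 v9_5 v9_6 v9_7 v9_8 v9_9 v9_10 v9_11 v9_12 v9_13 v9_14)
next
  case (Suc r)
  then show ?case by (simp add: Hs0 Hs1 Hs2 Hs3 Hs4 Hs5 Hs6 Hs7 Hs8 Hs9 Hs10 Hs11 Hs12 Hs13 Hs14)
qed




lemma tiling_card:
  assumes P: "P \<in> tilings R" and fin: "finite R"
  shows "3 * card P = card R"
proof -
  have sub: "P \<subseteq> tile_placements 1 3" and disj: "\<forall>S\<in>P. \<forall>T\<in>P. S \<noteq> T \<longrightarrow> S \<inter> T = {}"
    and U: "\<Union>P = R" using P by (auto simp: tilings_def)
  have "card R = sum card P"
    unfolding U[symmetric]
    by (rule card_Union_disjoint) (use disj sub tile_props(2) in \<open>auto simp: pairwise_def disjnt_def\<close>)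
  also have "\<dots> = sum (\<lambda>_. 3) P" by (rule sum.cong) (use sub tile_props(3) in auto)
  also have "\<dots> = 3 * card P" by simp
  finally show ?thesis by simp
qed

lemma rect_Reg: "{0..<4} \<times> {0..<n} = Reg (0,0,0,0) 0 n"
  by (auto simp: Reg_def pv.simps)

lemma T13_eq: "T13_4 N = (if 4 dvd N then G (3*(N div 4)) (0,0,0,0) else 0)"
proof (cases "4 dvd N")
  case True
  then obtain k where k: "N = 4*k" by auto
  have d: "4 dvd 3 * N" using True by simp
  have n: "3 * N div 4 = 3 * k" using k by simp
  let ?R = "{0..<4} \<times> {0..<3*k} :: (nat\<times>nat) set"
  have "{P. is_tiling 4 (3*k) 1 3 P \<and> card P = N} = tilings ?R"
  proof (intro equalityI subsetI)
    fix P assume "P \<in> {P. is_tiling 4 (3*k) 1 3 P \<and> card P = N}"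
    then show "P \<in> tilings ?R" by (simp add: is_tiling_def tilings_def)
  next
    fix P assume P: "P \<in> tilings ?R"
    have "3 * card P = card ?R" by (rule tiling_card[OF P]) simp
    then have "card P = N" using k by (simp add: card_cartesian_product)
    then show "P \<in> {P. is_tiling 4 (3*k) 1 3 P \<and> card P = N}" using P
      by (simp add: is_tiling_def tilings_def)
  qed
  then have "T13_4 N = card (tilings (Reg (0,0,0,0) 0 (3*k)))"
    unfolding T13_4_def using d n rect_Reg by simp
  also have "\<dots> = G (3*k) (0,0,0,0)" by (rule main) (auto simp: pv.simps)
  finally show ?thesis using True k by simp
next
  case False
  then have "\<not> 4 dvd 3 * N" by presburger
  then show ?thesis using False by (simp add: T13_4_def)
qed

lemma recG: "G (3*k+9) (0,0,0,0) + 3 * G (3*k+3) (0,0,0,0) = 5 * G (3*k+6) (0,0,0,0) + G (3*k) (0,0,0,0)"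
proof -
  have "H (3*k) (0,0,0,0) = 0" using Hrec[of "3*k"] by blast
  then show ?thesis unfolding H_def by linarith
qed




lemma tN: "(of_nat (T13_4 N) :: rat) = (if 4 dvd N then of_nat (G (3*(N div 4)) (0,0,0,0)) else 0)"
  by (simp add: T13_eq)

lemma coeff_rec:
  fixes t :: "nat \<Rightarrow> rat"
  defines "t \<equiv> \<lambda>N. of_nat (T13_4 N)"
  shows "t (m+12) - 5 * t (m+8) + 3 * t (m+4) - t m = 0"
proof (cases "4 dvd m")
  case True
  then obtain k where k: "m = 4*k" by auto
  have e1: "(m+12) div 4 = k+3" "(m+8) div 4 = k+2" "(m+4) div 4 = k+1" "m div 4 = k" using k by simp_all
  have d: "4 dvd (m+12)" "4 dvd (m+8)" "4 dvd (m+4)" using True by simp_all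
  have r: "(of_nat (G (3*k+9) (0,0,0,0)) :: rat) + 3 * of_nat (G (3*k+3) (0,0,0,0)) =
      5 * of_nat (G (3*k+6) (0,0,0,0)) + of_nat (G (3*k) (0,0,0,0))"
    using arg_cong[OF recG[of k], of "of_nat :: nat \<Rightarrow> rat"] by simp
  have a: "3 * (k+3) = 3*k+9" "3*(k+2) = 3*k+6" "3*(k+1) = 3*k+3" by simp_all
  show ?thesis unfolding t_def tN using d True e1 a r by (simp add: algebra_simps)
next
  case False
  then have "\<not> 4 dvd (m+12)" "\<not> 4 dvd (m+8)" "\<not> 4 dvd (m+4)" by presburger+
  then show ?thesis unfolding t_def tN using False by simp
qed

theorem mainTheorem1:
  shows "Abs_fps (\<lambda>N. of_nat (T13_4 N) :: rat) =
    ((1 - fps_X)^2 * (1 + fps_X)^2 * (1 + fps_X^2)^2) /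
    (1 - 5 * fps_X^4 + 3 * fps_X^8 - fps_X^12)"
proof -
  define t where "t = (\<lambda>N. of_nat (T13_4 N) :: rat)"
  define A where "A = Abs_fps t"
  define D :: "rat fps" where "D = 1 - 5 * fps_X^4 + 3 * fps_X^8 - fps_X^12"
  have num: "((1 - fps_X)^2 * (1 + fps_X)^2 * (1 + fps_X^2)^2 :: rat fps) = 1 - 2 * fps_X^4 + fps_X^8"
    by (simp add: algebra_simps power2_eq_square power_numeral_reduce)
  have gen: "\<And>c5 c3 (B::rat fps). B * (1 - c5 * fps_X^4 + c3 * fps_X^8 - fps_X^12) = B - c5 * (fps_X^4 * B) + c3 * (fps_X^8 * B) - fps_X^12 * B"
    by (simp add: algebra_simps)
  have AD: "A * D = A - fps_const 5 * (fps_X^4 * A) + fps_const 3 * (fps_X^8 * A) - fps_X^12 * A"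
    unfolding D_def numeral_fps_const[of "num.Bit1 (num.Bit0 num.One)"] numeral_fps_const[of "num.Bit1 num.One"]
    by (rule gen)
  have v0: "t 0 = 1" "t 4 = 3" "t 8 = 13"
    unfolding t_def tN by (simp_all add: v0_0 v3_0 v6_0)
  have vz: "t n = 0" if "\<not> 4 dvd n" for n unfolding t_def tN using that by simp
  have "A * D = 1 - 2 * fps_X^4 + fps_X^8"
  proof (rule fps_ext)
    fix n
    have lhs: "fps_nth (A * D) n = t n - 5 * (if n < 4 then 0 else t (n-4)) + 3 * (if n < 8 then 0 else t (n-8))
        - (if n < 12 then 0 else t (n-12))"
      unfolding AD by (simp add: fps_X_power_mult_nth A_def del: fps_mult_left_const_nth) (simp add: fps_X_power_mult_nth)
    have rhs: "fps_nth (1 - 2 * fps_X^4 + fps_X^8 :: rat fps) n = (if n = 0 then 1 else 0) - 2 * (if n = 4 then 1 else 0) + (if n = 8 then 1 else 0)"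
      by (simp add: numeral_fps_const)
    show "fps_nth (A * D) n = fps_nth (1 - 2 * fps_X^4 + fps_X^8 :: rat fps) n"
    proof (cases "n < 12")
      case True
      then have "n = 0 \<or> n = 1 \<or> n = 2 \<or> n = 3 \<or> n = 4 \<or> n = 5 \<or> n = 6 \<or> n = 7 \<or> n = 8 \<or> n = 9 \<or> n = 10 \<or> n = 11" by presburger
      then show ?thesis unfolding lhs rhs
        by (elim disjE) (simp_all add: v0 vz)
    next
      case False
      then obtain m where m: "n = m + 12" by (metis add.commute le_add_diff_inverse not_less)
      have "t (m+12) - 5 * t (m+8) + 3 * t (m+4) - t m = 0" unfolding t_def by (rule coeff_rec)
      then have "t n - 5 * t (n-4) + 3 * t (n-8) - t (n-12) = 0" using m by (simp add: add.commute)
      then show ?thesis unfolding lhs rhs using False by simp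
    qed
  qed
  moreover have D0: "fps_nth D 0 \<noteq> 0" by (simp add: D_def numeral_fps_const)
  ultimately have "(1 - 2 * fps_X^4 + fps_X^8) / D = A"
    by (metis fps_divide_unit inverse_mult_eq_1' mult.assoc mult.right_neutral)
  then show ?thesis unfolding num A_def t_def D_def by simp
qed


end
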